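(* For every integer $m\ge 1$, every $0\le s\le m$ and every fixed $\lambda_1,\dots,\lambda_m$, the function $G_s(m,\{\lambda_j\}|\{\xi_k\})$ is symmetric under all permutations of the variables $\xi_1,\xi_2,\dots,\xi_m$.
   Context: Fix a real parameter $\zeta\in(0,\pi)$. For integers $m\ge1$ and $0\le s\le m$ set $\epsilon_j=-\tfrac12$ for $1\le j\le s$ and $\epsilon_j=+\tfrac12$ for $s<j\le m$; $\epsilon_j$ is attached to the variable $\lambda_j$. For complex variables $\lambda_1,\dots,\lambda_m,\xi_1,\dots,\xi_m$ define $$G_s(m,\{\lambda_j\}|\{\xi_k\})=\frac{1}{s!(m-s)!}\sum_{\sigma\in S_m}(-1)^{[\sigma]}\prod_{1\le k<j\le m}\frac{\sinh(\lambda_{\sigma(j)}-\xi_k+i\epsilon_{\sigma(j)}\zeta)\,\sinh(\lambda_{\sigma(k)}-\xi_j-i\epsilon_{\sigma(k)}\zeta)}{\sinh(\lambda_{\sigma(j)}-\lambda_{\sigma(k)}+i(\epsilon_{\sigma(j)}+\epsilon_{\sigma(k)})\zeta)},$$ where the sum is over all permutations $\sigma$ of $\{1,\dots,m\}$ and $(-1)^{[\sigma]}$ is the sign of $\sigma$ (an identity of meromorphic functions). *)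

theory Defs
  imports "HOL-Analysis.Analysis" "HOL-Combinatorics.Permutations"
begin

definition eps :: "nat \<Rightarrow> nat \<Rightarrow> real" where
  "eps s j = (if j \<le> s then - 1 / 2 else 1 / 2)"

definition G :: "real \<Rightarrow> nat \<Rightarrow> nat \<Rightarrow> (nat \<Rightarrow> complex) \<Rightarrow> (nat \<Rightarrow> complex) \<Rightarrow> complex" where
  "G \<zeta> s m lam xi =
     (1 / (of_nat (fact s) * of_nat (fact (m - s)))) *
     (\<Sum>\<sigma> | \<sigma> permutes {1..m}.
        of_int (sign \<sigma>) *
        (\<Prod>j\<in>{1..m}. \<Prod>k\<in>{1..<j}.
           sinh (lam (\<sigma> j) - xi k + \<i> * of_real (eps s (\<sigma> j) * \<zeta>)) *
           sinh (lam (\<sigma> k) - xi j - \<i> * of_real (eps s (\<sigma> k) * \<zeta>)) /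
           sinh (lam (\<sigma> j) - lam (\<sigma> k) + \<i> * of_real ((eps s (\<sigma> j) + eps s (\<sigma> k)) * \<zeta>))))"

end

theory Submission
  imports Defs
begin
lemma key_rat:
  fixes a b X Y C D :: complex
  assumes nz: "a \<noteq> 0" "b \<noteq> 0" "X \<noteq> 0" "Y \<noteq> 0" "C \<noteq> 0" "D \<noteq> 0"
  and h1: "b*C*D/a - a/(b*C*D) \<noteq> 0" and h2: "a*C*D/b - b/(a*C*D) \<noteq> 0"
  shows "(b*D/X - X/(b*D)) * (a/(Y*C) - (Y*C)/a) / (b*C*D/a - a/(b*C*D))
       - (a*C/X - X/(a*C)) * (b/(Y*D) - (Y*D)/b) / (a*C*D/b - b/(a*C*D))
       = (b*D/Y - Y/(b*D)) * (a/(X*C) - (X*C)/a) / (b*C*D/a - a/(b*C*D))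
       - (a*C/Y - Y/(a*C)) * (b/(X*D) - (X*D)/b) / (a*C*D/b - b/(a*C*D))"
proof -
  have e1: "b*C*D*b*C*D - a*a \<noteq> 0" using h1 nz by (auto simp: field_simps)
  have e2: "a*C*D*a*C*D - b*b \<noteq> 0" using h2 nz by (auto simp: field_simps)
  show ?thesis using nz e1 e2 by (simp add: field_simps)
qed

lemma sinh_exp_c: "sinh (z::complex) = (exp z - inverse (exp z)) / 2"
  by (simp add: sinh_def exp_minus scaleR_conv_of_real field_simps)

lemma key_sinh:
  fixes A B x y c d :: complex
  assumes "sinh (B - A + (c + d)) \<noteq> 0" "sinh (A - B + (c + d)) \<noteq> 0"
  shows "sinh (B - x + d) * sinh (A - y - c) / sinh (B - A + (c + d))
       - sinh (A - x + c) * sinh (B - y - d) / sinh (A - B + (c + d))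
       = sinh (B - y + d) * sinh (A - x - c) / sinh (B - A + (c + d))
       - sinh (A - y + c) * sinh (B - x - d) / sinh (A - B + (c + d))"
proof -
  define a b X Y C D where "a = exp A" and "b = exp B" and "X = exp x" and "Y = exp y" and "C = exp c" and "D = exp d"
  have nz: "a \<noteq> 0" "b \<noteq> 0" "X \<noteq> 0" "Y \<noteq> 0" "C \<noteq> 0" "D \<noteq> 0"
    by (auto simp: a_def b_def X_def Y_def C_def D_def)
  have sh: "sinh u = (W - V)/2" if "exp u = W" "W * V = 1" for u W V :: complex
    using that inverse_unique[OF that(2)] by (simp add: sinh_exp_c)
  have r1: "sinh (B - z + d) = (b*D/Z - Z/(b*D))/2" if "Z = exp z" for z Z
    by (rule sh) (use nz that in \<open>simp_all add: a_def b_def X_def Y_def C_def D_def exp_add exp_diff field_simps\<close>)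
  have r2: "sinh (A - z - c) = (a/(Z*C) - (Z*C)/a)/2" if "Z = exp z" for z Z
    by (rule sh) (use nz that in \<open>simp_all add: a_def b_def X_def Y_def C_def D_def exp_add exp_diff field_simps\<close>)
  have r3: "sinh (A - z + c) = (a*C/Z - Z/(a*C))/2" if "Z = exp z" for z Z
    by (rule sh) (use nz that in \<open>simp_all add: a_def b_def X_def Y_def C_def D_def exp_add exp_diff field_simps\<close>)
  have r4: "sinh (B - z - d) = (b/(Z*D) - (Z*D)/b)/2" if "Z = exp z" for z Z
    by (rule sh) (use nz that in \<open>simp_all add: a_def b_def X_def Y_def C_def D_def exp_add exp_diff field_simps\<close>)
  have r5: "sinh (B - A + (c + d)) = (b*C*D/a - a/(b*C*D))/2"
    by (rule sh) (use nz in \<open>simp_all add: a_def b_def X_def Y_def C_def D_def exp_add exp_diff field_simps\<close>)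
  have r6: "sinh (A - B + (c + d)) = (a*C*D/b - b/(a*C*D))/2"
    by (rule sh) (use nz in \<open>simp_all add: a_def b_def X_def Y_def C_def D_def exp_add exp_diff field_simps\<close>)
  have h1: "b*C*D/a - a/(b*C*D) \<noteq> 0" using assms(1) r5 by simp
  have h2: "a*C*D/b - b/(a*C*D) \<noteq> 0" using assms(2) r6 by simp
  have e: "\<And>P Q R :: complex. (P/2)*(Q/2)/(R/2) = P*Q/R/2" by simp
  show ?thesis
    unfolding r1[OF X_def] r1[OF Y_def] r2[OF X_def] r2[OF Y_def] r3[OF X_def] r3[OF Y_def]
      r4[OF X_def] r4[OF Y_def] r5 r6 e diff_divide_distrib[symmetric]
    using key_rat[OF nz h1 h2] by simp
qed

definition TT :: "nat \<Rightarrow> (nat \<Rightarrow> complex \<Rightarrow> complex) \<Rightarrow> (nat \<Rightarrow> complex \<Rightarrow> complex)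
   \<Rightarrow> (nat \<Rightarrow> nat \<Rightarrow> complex) \<Rightarrow> (nat \<Rightarrow> nat) \<Rightarrow> (nat \<Rightarrow> complex) \<Rightarrow> complex" where
  "TT m f g h \<sigma> \<xi> = (\<Prod>j\<in>{1..m}. \<Prod>k\<in>{1..<j}. f (\<sigma> j) (\<xi> k) * g (\<sigma> k) (\<xi> j) / h (\<sigma> j) (\<sigma> k))"

definition SS where
  "SS m f g h \<xi> = (\<Sum>\<sigma> | \<sigma> permutes {1..m}. of_int (sign \<sigma>) * TT m f g h \<sigma> \<xi>)"

lemma O_closed:
  assumes "(j, k) \<in> Sigma {1..m} (\<lambda>j. {1..<j}) - {(Suc p, p)}" "1 \<le> p" "Suc p \<le> m"
  shows "(Transposition.transpose p (Suc p) j, k) \<in> Sigma {1..m} (\<lambda>j. {1..<j}) - {(Suc p, p)}"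
    "(j, Transposition.transpose p (Suc p) k) \<in> Sigma {1..m} (\<lambda>j. {1..<j}) - {(Suc p, p)}"
    "(Transposition.transpose p (Suc p) j, Transposition.transpose p (Suc p) k) \<in> Sigma {1..m} (\<lambda>j. {1..<j}) - {(Suc p, p)}"
  using assms by (auto simp: Transposition.transpose_def)

lemma TT_split:
  assumes "1 \<le> p" "Suc p \<le> m"
  shows "TT m f g h \<sigma> \<xi> =
    (\<Prod>(j,k)\<in>Sigma {1..m} (\<lambda>j. {1..<j}) - {(Suc p, p)}. f (\<sigma> j) (\<xi> k)) *
    (\<Prod>(j,k)\<in>Sigma {1..m} (\<lambda>j. {1..<j}) - {(Suc p, p)}. g (\<sigma> k) (\<xi> j)) /
    (\<Prod>(j,k)\<in>Sigma {1..m} (\<lambda>j. {1..<j}) - {(Suc p, p)}. h (\<sigma> j) (\<sigma> k)) *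
    (f (\<sigma> (Suc p)) (\<xi> p) * g (\<sigma> p) (\<xi> (Suc p)) / h (\<sigma> (Suc p)) (\<sigma> p))"
proof -
  let ?P = "Sigma {1..m} (\<lambda>j. {1..<j})"
  have fin: "finite ?P" by auto
  have mem: "(Suc p, p) \<in> ?P" using assms by auto
  have "TT m f g h \<sigma> \<xi> = (\<Prod>(j,k)\<in>?P. f (\<sigma> j) (\<xi> k) * g (\<sigma> k) (\<xi> j) / h (\<sigma> j) (\<sigma> k))"
    unfolding TT_def by (subst prod.Sigma) auto
  also have "\<dots> = (\<Prod>(j,k)\<in>?P - {(Suc p, p)}. f (\<sigma> j) (\<xi> k) * g (\<sigma> k) (\<xi> j) / h (\<sigma> j) (\<sigma> k)) *
    (f (\<sigma> (Suc p)) (\<xi> p) * g (\<sigma> p) (\<xi> (Suc p)) / h (\<sigma> (Suc p)) (\<sigma> p))"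
    by (subst prod.remove[OF fin mem]) (simp add: mult.commute)
  also have "(\<Prod>(j,k)\<in>?P - {(Suc p, p)}. f (\<sigma> j) (\<xi> k) * g (\<sigma> k) (\<xi> j) / h (\<sigma> j) (\<sigma> k))
    = (\<Prod>(j,k)\<in>?P - {(Suc p, p)}. f (\<sigma> j) (\<xi> k)) * (\<Prod>(j,k)\<in>?P - {(Suc p, p)}. g (\<sigma> k) (\<xi> j)) /
      (\<Prod>(j,k)\<in>?P - {(Suc p, p)}. h (\<sigma> j) (\<sigma> k))"
    by (simp add: case_prod_unfold prod_dividef prod.distrib)
  finally show ?thesis .
qed

lemma adj:
  assumes p: "1 \<le> p" "Suc p \<le> m"
  and sym: "\<And>a b x y. a \<in> {1..m} \<Longrightarrow> b \<in> {1..m} \<Longrightarrow> a \<noteq> b \<Longrightarrow>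
      f b x * g a y / h b a - f a x * g b y / h a b = f b y * g a x / h b a - f a y * g b x / h a b"
  shows "SS m f g h (\<xi> \<circ> Transposition.transpose p (Suc p)) = SS m f g h \<xi>"
proof -
  let ?t = "Transposition.transpose p (Suc p)"
  let ?O = "Sigma {1..m} (\<lambda>j. {1..<j}) - {(Suc p, p)}"
  let ?Perm = "{\<sigma>. \<sigma> permutes {1..m}}"
  define K where "K \<sigma> \<xi> = (\<Prod>(j,k)\<in>?O. f (\<sigma> j) (\<xi> k)) * (\<Prod>(j,k)\<in>?O. g (\<sigma> k) (\<xi> j)) /
    (\<Prod>(j,k)\<in>?O. h (\<sigma> j) (\<sigma> k))" for \<sigma> :: "nat \<Rightarrow> nat" and \<xi> :: "nat \<Rightarrow> complex"
  define \<phi> where "\<phi> \<sigma> \<xi> = f (\<sigma> (Suc p)) (\<xi> p) * g (\<sigma> p) (\<xi> (Suc p)) / h (\<sigma> (Suc p)) (\<sigma> p)"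
    for \<sigma> :: "nat \<Rightarrow> nat" and \<xi> :: "nat \<Rightarrow> complex"
  note OC = O_closed[OF _ p]
  have tt: "?t (?t x) = x" for x by simp
  have K1: "K (\<sigma> \<circ> ?t) \<xi> = K \<sigma> \<xi>" for \<sigma> \<xi>
  proof -
    have "(\<Prod>(j,k)\<in>?O. f ((\<sigma> \<circ> ?t) j) (\<xi> k)) = (\<Prod>(j,k)\<in>?O. f (\<sigma> j) (\<xi> k))"
      by (rule prod.reindex_bij_witness[where i="\<lambda>(j,k). (?t j, k)" and j="\<lambda>(j,k). (?t j, k)"])
         (use p in \<open>auto simp: Transposition.transpose_def split: if_splits\<close>)
    moreover have "(\<Prod>(j,k)\<in>?O. g ((\<sigma> \<circ> ?t) k) (\<xi> j)) = (\<Prod>(j,k)\<in>?O. g (\<sigma> k) (\<xi> j))"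
      by (rule prod.reindex_bij_witness[where i="\<lambda>(j,k). (j, ?t k)" and j="\<lambda>(j,k). (j, ?t k)"])
         (use p in \<open>auto simp: Transposition.transpose_def split: if_splits\<close>)
    moreover have "(\<Prod>(j,k)\<in>?O. h ((\<sigma> \<circ> ?t) j) ((\<sigma> \<circ> ?t) k)) = (\<Prod>(j,k)\<in>?O. h (\<sigma> j) (\<sigma> k))"
      by (rule prod.reindex_bij_witness[where i="\<lambda>(j,k). (?t j, ?t k)" and j="\<lambda>(j,k). (?t j, ?t k)"])
         (use p in \<open>auto simp: Transposition.transpose_def split: if_splits\<close>)
    ultimately show ?thesis unfolding K_def by simp
  qed
  have K2: "K \<sigma> (\<xi> \<circ> ?t) = K \<sigma> \<xi>" for \<sigma> \<xi>
  proof -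
    have "(\<Prod>(j,k)\<in>?O. f (\<sigma> j) ((\<xi> \<circ> ?t) k)) = (\<Prod>(j,k)\<in>?O. f (\<sigma> j) (\<xi> k))"
      by (rule prod.reindex_bij_witness[where i="\<lambda>(j,k). (j, ?t k)" and j="\<lambda>(j,k). (j, ?t k)"])
         (use p in \<open>auto simp: Transposition.transpose_def split: if_splits\<close>)
    moreover have "(\<Prod>(j,k)\<in>?O. g (\<sigma> k) ((\<xi> \<circ> ?t) j)) = (\<Prod>(j,k)\<in>?O. g (\<sigma> k) (\<xi> j))"
      by (rule prod.reindex_bij_witness[where i="\<lambda>(j,k). (?t j, k)" and j="\<lambda>(j,k). (?t j, k)"])
         (use p in \<open>auto simp: Transposition.transpose_def split: if_splits\<close>)
    ultimately show ?thesis unfolding K_def by simp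
  qed
  have TTe: "TT m f g h \<sigma> \<xi> = K \<sigma> \<xi> * \<phi> \<sigma> \<xi>" for \<sigma> \<xi>
    unfolding K_def \<phi>_def by (rule TT_split[OF p])
  have sgn: "of_int (sign (\<sigma> \<circ> ?t)) = - (of_int (sign \<sigma>) :: complex)" if "\<sigma> permutes {1..m}" for \<sigma>
  proof -
    have "permutation \<sigma>" using that permutation_permutes by blast
    moreover have "permutation ?t" by (simp add: permutation_swap_id)
    ultimately show ?thesis by (simp add: sign_compose sign_swap_id)
  qed
  have D: "2 * SS m f g h \<xi> = (\<Sum>\<sigma>\<in>?Perm. of_int (sign \<sigma>) * K \<sigma> \<xi> * (\<phi> \<sigma> \<xi> - \<phi> (\<sigma> \<circ> ?t) \<xi>))" for \<xi>
  proof -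
    have "SS m f g h \<xi> = (\<Sum>\<sigma>\<in>?Perm. of_int (sign (\<sigma> \<circ> ?t)) * TT m f g h (\<sigma> \<circ> ?t) \<xi>)"
      unfolding SS_def
      by (rule sum.reindex_bij_witness[where i="\<lambda>\<sigma>. \<sigma> \<circ> ?t" and j="\<lambda>\<sigma>. \<sigma> \<circ> ?t"])
         (use p in \<open>auto simp: o_assoc[symmetric] intro!: permutes_compose permutes_swap_id\<close>)
    also have "\<dots> = (\<Sum>\<sigma>\<in>?Perm. - of_int (sign \<sigma>) * K \<sigma> \<xi> * \<phi> (\<sigma> \<circ> ?t) \<xi>)"
      by (rule sum.cong) (auto simp: sgn TTe K1)
    finally have 1: "SS m f g h \<xi> = \<dots>" .
    have 2: "SS m f g h \<xi> = (\<Sum>\<sigma>\<in>?Perm. of_int (sign \<sigma>) * K \<sigma> \<xi> * \<phi> \<sigma> \<xi>)"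
      unfolding SS_def by (simp add: TTe mult.assoc)
    have "2 * SS m f g h \<xi> = SS m f g h \<xi> + SS m f g h \<xi>" by simp
    also have "\<dots> = (\<Sum>\<sigma>\<in>?Perm. of_int (sign \<sigma>) * K \<sigma> \<xi> * \<phi> \<sigma> \<xi>) +
       (\<Sum>\<sigma>\<in>?Perm. - of_int (sign \<sigma>) * K \<sigma> \<xi> * \<phi> (\<sigma> \<circ> ?t) \<xi>)"
      using 1 2 by simp
    also have "\<dots> = (\<Sum>\<sigma>\<in>?Perm. of_int (sign \<sigma>) * K \<sigma> \<xi> * (\<phi> \<sigma> \<xi> - \<phi> (\<sigma> \<circ> ?t) \<xi>))"
      by (simp add: sum.distrib[symmetric] algebra_simps)
    finally show ?thesis .
  qed
  have E: "\<phi> \<sigma> (\<xi> \<circ> ?t) - \<phi> (\<sigma> \<circ> ?t) (\<xi> \<circ> ?t) = \<phi> \<sigma> \<xi> - \<phi> (\<sigma> \<circ> ?t) \<xi>"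
    if "\<sigma> permutes {1..m}" for \<sigma>
  proof -
    have a: "\<sigma> p \<in> {1..m}" "\<sigma> (Suc p) \<in> {1..m}" using p permutes_in_image[OF that] by auto
    have b: "\<sigma> p \<noteq> \<sigma> (Suc p)" using permutes_inj[OF that] by (auto dest: injD)
    show ?thesis unfolding \<phi>_def using sym[OF a b, of "\<xi> (Suc p)" "\<xi> p"] by simp
  qed
  have "2 * SS m f g h (\<xi> \<circ> ?t) = 2 * SS m f g h \<xi>"
    unfolding D by (rule sum.cong) (auto simp: K2 E)
  then show ?thesis by simp
qed


lemma inv_comp:
  assumes "\<And>\<xi>. S (\<xi> \<circ> \<tau>1) = S \<xi>" "\<And>\<xi>. S (\<xi> \<circ> \<tau>2) = S \<xi>"
  shows "S (\<xi> \<circ> (\<tau>1 \<circ> \<tau>2)) = S \<xi>"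
  using assms by (metis o_assoc)

lemma transp_conj:
  assumes "a < b"
  shows "Transposition.transpose a (Suc b) =
    Transposition.transpose b (Suc b) \<circ> Transposition.transpose a b \<circ> Transposition.transpose b (Suc b)"
  using assms by (auto simp: Transposition.transpose_def fun_eq_iff)

lemma inv_transp:
  assumes adj: "\<And>p \<xi>. 1 \<le> p \<Longrightarrow> Suc p \<le> m \<Longrightarrow> S (\<xi> \<circ> Transposition.transpose p (Suc p)) = S \<xi>"
    and "1 \<le> a" "a < b" "b \<le> m"
  shows "S (\<xi> \<circ> Transposition.transpose a b) = S \<xi>"
proof -
  have "\<forall>\<xi>. a + 1 + d \<le> m \<longrightarrow> S (\<xi> \<circ> Transposition.transpose a (a + 1 + d)) = S \<xi>" for d
  proof (induction d)
    case 0
    show ?case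
    proof (intro allI impI)
      fix \<xi> assume "a + 1 + 0 \<le> m"
      then have "Suc a \<le> m" by simp
      from adj[OF assms(2) this, of \<xi>] show "S (\<xi> \<circ> Transposition.transpose a (a + 1 + 0)) = S \<xi>"
        by simp
    qed
  next
    case (Suc d)
    show ?case
    proof (intro allI impI)
      fix \<xi> assume le: "a + 1 + Suc d \<le> m"
      have eq: "Transposition.transpose a (a + 1 + Suc d) =
        Transposition.transpose (a + 1 + d) (Suc (a + 1 + d)) \<circ> Transposition.transpose a (a + 1 + d)
          \<circ> Transposition.transpose (a + 1 + d) (Suc (a + 1 + d))"
        using transp_conj[of a "a + 1 + d"] by simp
      have i1: "S (\<xi> \<circ> Transposition.transpose (a + 1 + d) (Suc (a + 1 + d))) = S \<xi>" for \<xi>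
        using adj[of "a + 1 + d"] le assms(2) by simp
      have i2: "S (\<xi> \<circ> Transposition.transpose a (a + 1 + d)) = S \<xi>" for \<xi>
        using Suc.IH le by (simp add: comp_def)
      show "S (\<xi> \<circ> Transposition.transpose a (a + 1 + Suc d)) = S \<xi>"
        unfolding eq by (intro inv_comp i1 i2)
    qed
  qed
  from this[of "b - a - 1"] assms show ?thesis by simp
qed

lemma inv_perm:
  assumes adj: "\<And>p \<xi>. 1 \<le> p \<Longrightarrow> Suc p \<le> m \<Longrightarrow> S (\<xi> \<circ> Transposition.transpose p (Suc p)) = S \<xi>"
    and "\<tau> permutes {1..m}"
  shows "S (\<xi> \<circ> \<tau>) = S \<xi>"
proof -
  have "\<forall>\<xi>. S (\<xi> \<circ> \<tau>) = S \<xi>"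
    using assms(2) finite_atLeastAtMost
  proof (induction rule: permutes_induct)
    case id
    then show ?case by simp
  next
    case (swap a b p)
    have tr: "S (\<xi> \<circ> Transposition.transpose a b) = S \<xi>" for \<xi>
    proof (cases "a < b")
      case True
      then show ?thesis using inv_transp[where S=S and m=m and a=a and b=b, OF adj] swap by auto
    next
      case False
      then have "b < a" using swap by simp
      then show ?thesis using inv_transp[where S=S and m=m and a=b and b=a, OF adj] swap by (auto simp: transpose_commute)
    qed
    show ?case using inv_comp[of S, OF tr] swap.IH by blast
  qed
  then show ?thesis by blast
qed

theorem lemma3p1:
  fixes \<zeta> :: real and m s :: nat and lam xi :: "nat \<Rightarrow> complex" and \<tau> :: "nat \<Rightarrow> nat"
  assumes "0 < \<zeta>" and "\<zeta> < pi"
    and "1 \<le> m" and "s \<le> m"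
    and "\<And>a b. a \<in> {1..m} \<Longrightarrow> b \<in> {1..m} \<Longrightarrow> a \<noteq> b \<Longrightarrow>
           sinh (lam a - lam b + \<i> * of_real ((eps s a + eps s b) * \<zeta>)) \<noteq> 0"
    and "\<tau> permutes {1..m}"
  shows "G \<zeta> s m lam (xi \<circ> \<tau>) = G \<zeta> s m lam xi"
  proof -
  define f where "f a x = sinh (lam a - x + \<i> * of_real (eps s a * \<zeta>))" for a x
  define g where "g a y = sinh (lam a - y - \<i> * of_real (eps s a * \<zeta>))" for a y
  define h where "h a b = sinh (lam a - lam b + \<i> * of_real ((eps s a + eps s b) * \<zeta>))" for a b
  have Geq: "G \<zeta> s m lam xi' = (1 / (of_nat (fact s) * of_nat (fact (m - s)))) * SS m f g h xi'" for xi'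
    unfolding G_def SS_def TT_def f_def g_def h_def by simp
  have sym: "f b x * g a y / h b a - f a x * g b y / h a b = f b y * g a x / h b a - f a y * g b x / h a b"
    if "a \<in> {1..m}" "b \<in> {1..m}" "a \<noteq> b" for a b x y
  proof -
    let ?c = "\<i> * of_real (eps s a * \<zeta>)" and ?d = "\<i> * of_real (eps s b * \<zeta>)"
    have hba: "h b a = sinh (lam b - lam a + (?c + ?d))"
      unfolding h_def by (simp add: algebra_simps)
    have hab: "h a b = sinh (lam a - lam b + (?c + ?d))"
      unfolding h_def by (simp add: algebra_simps)
    have n1: "sinh (lam b - lam a + (?c + ?d)) \<noteq> 0" using assms(5)[OF that(2,1)] that(3) hba h_def by auto
    have n2: "sinh (lam a - lam b + (?c + ?d)) \<noteq> 0" using assms(5)[OF that] hab h_def by auto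
    show ?thesis unfolding hab hba unfolding f_def g_def
      using key_sinh[OF n1 n2, of x y] by simp
  qed
  have "SS m f g h (xi \<circ> \<tau>) = SS m f g h xi"
    by (rule inv_perm[OF _ assms(6)]) (rule adj, auto intro: sym)
  then show ?thesis unfolding Geq by simp
qed

end
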